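(* Let $n\ge4$ and $d$ be integers. If \[ b_{n,d}(1,2)+b_{n,d}(2,1)=2\,p_{n,d}(1,2), \] then \[ b_{n,d}(1,3)+b_{n,d}(3,1)=2\,p_{n,d}(1,3). \]
   Context: For a permutation $\pi=\pi_1\cdots\pi_n$ of $[n]$ (one-line notation), an ascent is a position $t$ with $\pi_t<\pi_{t+1}$ and a descent one with $\pi_t>\pi_{t+1}$; the height of a word is its number of ascents minus its number of descents. $\pi$ is a ballot permutation if every prefix $\pi_1\cdots\pi_t$ has nonnegative height. $b_{n,d}(i,j)$ is the number of ballot permutations of $[n]$ with exactly $d$ descents that contain $i\,n\,j$ as a factor ($\pi_t=i,\pi_{t+1}=n,\pi_{t+2}=j$ for some $t$). A cycle $(c_1\cdots c_k)$ means $c_1\mapsto c_2\mapsto\cdots\mapsto c_k\mapsto c_1$; $\operatorname{cdes}(c)=\lvert\{t\in[k]:c_t>c_{t+1}\}\rvert$, $\operatorname{casc}(c)=\lvert\{t\in[k]:c_t<c_{t+1}\}\rvert$ with $c_{k+1}=c_1$; the cyclic weight of a cycle is $\min(\operatorname{cdes}(c),\operatorname{casc}(c))$ and that of a permutation is the sum over its cycles. An odd order permutation has all cycles of odd length. $p_{n,d}(i,j)$ is the number of odd order permutations $\pi$ of $[n]$ with cyclic weight $d$ such that $\pi(i)=n$ and $\pi(n)=j$ (i.e. containing $i\,n\,j$ as a cyclic factor). *)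

theory Defs
  imports "HOL-Combinatorics.Permutations"
begin

definition is_perm_list :: "nat \<Rightarrow> nat list \<Rightarrow> bool" where
  "is_perm_list n w \<longleftrightarrow> distinct w \<and> set w = {1..n}"

definition asc_count :: "nat list \<Rightarrow> nat" where
  "asc_count w = card {t. Suc t < length w \<and> w ! t < w ! Suc t}"

definition des_count :: "nat list \<Rightarrow> nat" where
  "des_count w = card {t. Suc t < length w \<and> w ! t > w ! Suc t}"

definition height :: "nat list \<Rightarrow> int" where
  "height w = int (asc_count w) - int (des_count w)"

definition ballot :: "nat list \<Rightarrow> bool" where
  "ballot w \<longleftrightarrow> (\<forall>t \<le> length w. height (take t w) \<ge> 0)"

definition has_factor3 :: "nat list \<Rightarrow> nat \<Rightarrow> nat \<Rightarrow> nat \<Rightarrow> bool" where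
  "has_factor3 w a b c \<longleftrightarrow>
     (\<exists>t. t + 2 < length w \<and> w ! t = a \<and> w ! (t + 1) = b \<and> w ! (t + 2) = c)"

definition b_count :: "nat \<Rightarrow> int \<Rightarrow> nat \<Rightarrow> nat \<Rightarrow> nat" where
  "b_count n d i j = card {w. is_perm_list n w \<and> ballot w \<and> int (des_count w) = d
                              \<and> has_factor3 w i n j}"

definition orbit_len :: "(nat \<Rightarrow> nat) \<Rightarrow> nat \<Rightarrow> nat" where
  "orbit_len f x = (LEAST k. 0 < k \<and> (f ^^ k) x = x)"

definition cycle_list :: "(nat \<Rightarrow> nat) \<Rightarrow> nat \<Rightarrow> nat list" where
  "cycle_list f x = map (\<lambda>k. (f ^^ k) x) [0..<orbit_len f x]"

definition cdes :: "nat list \<Rightarrow> nat" where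
  "cdes c = card {t. t < length c \<and> c ! t > c ! ((t + 1) mod length c)}"

definition casc :: "nat list \<Rightarrow> nat" where
  "casc c = card {t. t < length c \<and> c ! t < c ! ((t + 1) mod length c)}"

definition cyc_weight_cycle :: "nat list \<Rightarrow> nat" where
  "cyc_weight_cycle c = min (cdes c) (casc c)"

text \<open>Each cycle is counted once, via its minimal element as representative.\<close>
definition cycle_reps :: "nat \<Rightarrow> (nat \<Rightarrow> nat) \<Rightarrow> nat set" where
  "cycle_reps n f = {x \<in> {1..n}. \<forall>k. x \<le> (f ^^ k) x}"

definition cyclic_weight :: "nat \<Rightarrow> (nat \<Rightarrow> nat) \<Rightarrow> nat" where
  "cyclic_weight n f = (\<Sum>x\<in>cycle_reps n f. cyc_weight_cycle (cycle_list f x))"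

definition odd_order :: "nat \<Rightarrow> (nat \<Rightarrow> nat) \<Rightarrow> bool" where
  "odd_order n f \<longleftrightarrow> (\<forall>x\<in>{1..n}. odd (orbit_len f x))"

definition p_count :: "nat \<Rightarrow> int \<Rightarrow> nat \<Rightarrow> nat \<Rightarrow> nat" where
  "p_count n d i j = card {f. f permutes {1..n} \<and> odd_order n f
                              \<and> int (cyclic_weight n f) = d \<and> f i = n \<and> f n = j}"

end

theory Submission
  imports Defs
begin


definition Ob :: "(nat \<Rightarrow> nat) \<Rightarrow> nat \<Rightarrow> nat set" where
  "Ob f x = range (\<lambda>k. (f ^^ k) x)"

lemma ol_props:
  assumes "permutation f"
  shows "0 < orbit_len f x" "(f ^^ orbit_len f x) x = x"
    "\<And>k. 0 < k \<Longrightarrow> k < orbit_len f x \<Longrightarrow> (f ^^ k) x \<noteq> x"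
proof -
  obtain m where m: "m>0" "(f^^m) x = x" using permutation_self[OF assms] by blast
  have ex: "\<exists>k. 0<k \<and> (f^^k) x = x" using m by blast
  show "0 < orbit_len f x" "(f ^^ orbit_len f x) x = x"
    unfolding orbit_len_def using LeastI_ex[OF ex] by auto
  show "\<And>k. 0 < k \<Longrightarrow> k < orbit_len f x \<Longrightarrow> (f ^^ k) x \<noteq> x"
    unfolding orbit_len_def using not_less_Least by blast
qed

lemma ol_mod: "permutation f \<Longrightarrow> (f^^k) x = (f^^(k mod orbit_len f x)) x"
  by (simp add: funpow_mod_eq ol_props)

lemma ol_le: "0 < m \<Longrightarrow> (f^^m) x = x \<Longrightarrow> orbit_len f x \<le> m"
  unfolding orbit_len_def by (rule Least_le) simp

lemma ol_inj: assumes "permutation f" shows "inj_on (\<lambda>k. (f^^k) x) {..<orbit_len f x}"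
proof -
  have injf: "inj f" using assms permutation_bijective bij_is_inj by blast
  have *: False if "i < j" "j < orbit_len f x" "(f^^i) x = (f^^j) x" for i j
  proof -
    have "(f^^j) x = (f^^i) ((f^^(j-i)) x)" using \<open>i<j\<close>
      by (metis funpow_add le_add_diff_inverse less_imp_le_nat o_apply)
    with that(3) have "(f^^(j-i)) x = x" using inj_fn[OF injf] by (metis funpow_0 inj_eq) 
    with ol_props(3)[OF assms, of "j-i"] that show False by auto
  qed
  show ?thesis
    by (rule inj_onI) (metis * lessThan_iff linorder_neqE_nat)
qed

lemma Ob_eq: assumes "permutation f" shows "Ob f x = (\<lambda>k. (f^^k) x) ` {..<orbit_len f x}"
proof
  show "Ob f x \<subseteq> (\<lambda>k. (f^^k) x) ` {..<orbit_len f x}"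
  proof
    fix y assume "y \<in> Ob f x"
    then obtain k where "y = (f^^k) x" by (auto simp: Ob_def)
    then have "y = (f^^(k mod orbit_len f x)) x" using ol_mod[OF assms, of k x] by (rule trans)
    moreover have "k mod orbit_len f x < orbit_len f x" using ol_props(1)[OF assms] by simp
    ultimately show "y \<in> (\<lambda>k. (f^^k) x) ` {..<orbit_len f x}" by blast
  qed
  show "(\<lambda>k. (f^^k) x) ` {..<orbit_len f x} \<subseteq> Ob f x" by (auto simp: Ob_def)
qed

lemma card_Ob: "permutation f \<Longrightarrow> card (Ob f x) = orbit_len f x"
  by (simp add: Ob_eq card_image ol_inj)

lemma finite_Ob: "permutation f \<Longrightarrow> finite (Ob f x)"
  by (simp add: Ob_eq)

lemma self_Ob: "x \<in> Ob f x"
  unfolding Ob_def by (metis funpow_0 rangeI)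

lemma f_Ob: "y \<in> Ob f x \<Longrightarrow> f y \<in> Ob f x"
  unfolding Ob_def by (auto simp: image_iff) (metis comp_apply funpow.simps(2))

lemma funpow_Ob: "y \<in> Ob f x \<Longrightarrow> (f^^k) y \<in> Ob f x"
  by (induct k) (auto intro: f_Ob)

lemma Ob_funpow: assumes "permutation f" shows "Ob f ((f^^i) x) = Ob f x"
proof
  show "Ob f ((f^^i) x) \<subseteq> Ob f x"
  proof
    fix y assume "y \<in> Ob f ((f^^i) x)"
    then obtain k where "y = (f^^k) ((f^^i) x)" by (auto simp: Ob_def)
    then have "y = (f^^(k+i)) x" by (simp add: funpow_add)
    then show "y \<in> Ob f x" by (simp add: Ob_def)
  qed
next
  let ?L = "orbit_len f x"
  show "Ob f x \<subseteq> Ob f ((f^^i) x)"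
  proof
    fix y assume "y \<in> Ob f x"
    then obtain k where y: "y = (f^^k) x" unfolding Ob_def by auto
    have "(f^^(k + (?L - 1) * i)) ((f^^i) x) = (f^^(k + ?L * i)) x"
    proof -
      have e: "k + (?L - 1) * i + i = k + ?L * i" using ol_props(1)[OF assms, of x]
        by (cases "?L") simp_all
      have "(f^^(k + (?L - 1) * i)) ((f^^i) x) = (f^^(k + (?L - 1) * i + i)) x"
        by (simp only: funpow_add o_apply)
      then show ?thesis by (simp only: e)
    qed
    also have "\<dots> = (f^^((k + ?L * i) mod ?L)) x" by (rule ol_mod[OF assms])
    also have "(k + ?L * i) mod ?L = k mod ?L" by simp
    also have "(f^^(k mod ?L)) x = y" using y ol_mod[OF assms, of k x] by simp
    finally show "y \<in> Ob f ((f^^i) x)" unfolding Ob_def by (metis rangeI)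
  qed
qed

lemma Ob_mem: assumes "permutation f" "y \<in> Ob f x" shows "Ob f y = Ob f x"
proof -
  obtain k where "y = (f^^k) x" using assms(2) by (auto simp: Ob_def)
  then show ?thesis using Ob_funpow[OF assms(1)] by simp
qed

lemma inv_Ob: assumes "permutation f" "y \<in> Ob f x" shows "inv f y \<in> Ob f x"
proof -
  have b: "bij f" using assms(1) permutation_bijective by blast
  have fy: "f (inv f y) = y" using b by (simp add: bij_is_surj surj_f_inv_f)
  have "y \<in> Ob f (inv f y)" using f_Ob[OF self_Ob, of f "inv f y"] fy by simp
  then have "Ob f y = Ob f (inv f y)" by (rule Ob_mem[OF assms(1)])
  moreover have "Ob f y = Ob f x" by (rule Ob_mem[OF assms])
  ultimately show ?thesis using self_Ob[of "inv f y" f] by simp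
qed

lemma Ob_sub: assumes "f permutes S" "x \<in> S" shows "Ob f x \<subseteq> S"
proof -
  have "(f^^k) x \<in> S" for k by (induct k) (auto simp: assms permutes_in_image)
  then show ?thesis unfolding Ob_def by auto
qed

lemma cycle_list_set: "permutation f \<Longrightarrow> set (cycle_list f x) = Ob f x"
  by (simp add: cycle_list_def Ob_eq atLeast0LessThan)

lemma cdes_eq: assumes "permutation f"
  shows "cdes (cycle_list f x) = card {y \<in> Ob f x. f y < y}"
    "casc (cycle_list f x) = card {y \<in> Ob f x. y < f y}"
proof -
  let ?L = "orbit_len f x"
  let ?c = "cycle_list f x"
  have len: "length ?c = ?L" by (simp add: cycle_list_def)
  have nth: "?c ! t = (f^^t) x" if "t < ?L" for t using that by (simp add: cycle_list_def)
  have nth1: "?c ! ((t+1) mod ?L) = f ((f^^t) x)" if "t < ?L" for t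
  proof -
    have "?c ! ((t+1) mod ?L) = (f^^((t+1) mod ?L)) x"
      using ol_props(1)[OF assms] by (simp add: nth)
    also have "\<dots> = (f^^(t+1)) x" by (rule ol_mod[OF assms, symmetric])
    finally show ?thesis by simp
  qed
  have inj: "inj_on (\<lambda>k. (f^^k) x) A" if "A \<subseteq> {..<?L}" for A
    using ol_inj[OF assms] inj_on_subset that by blast
  have e1: "{t. t < length ?c \<and> ?c ! t > ?c ! ((t + 1) mod length ?c)} = {t. t < ?L \<and> f ((f^^t) x) < (f^^t) x}"
  proof (rule Collect_cong)
    fix t show "(t < length ?c \<and> ?c ! t > ?c ! ((t + 1) mod length ?c)) = (t < ?L \<and> f ((f^^t) x) < (f^^t) x)"
      using len nth[of t] nth1[of t] by (cases "t < ?L") simp_all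
  qed
  have e2: "{t. t < length ?c \<and> ?c ! t < ?c ! ((t + 1) mod length ?c)} = {t. t < ?L \<and> (f^^t) x < f ((f^^t) x)}"
  proof (rule Collect_cong)
    fix t show "(t < length ?c \<and> ?c ! t < ?c ! ((t + 1) mod length ?c)) = (t < ?L \<and> (f^^t) x < f ((f^^t) x))"
      using len nth[of t] nth1[of t] by (cases "t < ?L") simp_all
  qed
  have i1: "{y \<in> Ob f x. f y < y} = (\<lambda>k. (f^^k) x) ` {t. t < ?L \<and> f ((f^^t) x) < (f^^t) x}"
    unfolding Ob_eq[OF assms] by auto
  have i2: "{y \<in> Ob f x. y < f y} = (\<lambda>k. (f^^k) x) ` {t. t < ?L \<and> (f^^t) x < f ((f^^t) x)}"
    unfolding Ob_eq[OF assms] by auto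
  show "cdes (cycle_list f x) = card {y \<in> Ob f x. f y < y}"
  proof -
    have "card {y \<in> Ob f x. f y < y} = card {t. t < ?L \<and> f ((f^^t) x) < (f^^t) x}"
      unfolding i1 by (rule card_image, rule inj, blast)
    then show ?thesis unfolding cdes_def e1 by simp
  qed
  show "casc (cycle_list f x) = card {y \<in> Ob f x. y < f y}"
  proof -
    have "card {y \<in> Ob f x. y < f y} = card {t. t < ?L \<and> (f^^t) x < f ((f^^t) x)}"
      unfolding i2 by (rule card_image, rule inj, blast)
    then show ?thesis unfolding casc_def e2 by simp
  qed
qed

definition wt :: "(nat \<Rightarrow> nat) \<Rightarrow> nat set \<Rightarrow> nat" where
  "wt f Q = min (card {y \<in> Q. f y < y}) (card {y \<in> Q. y < f y})"

lemma cw_eq: assumes "f permutes {1..n}"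
  shows "cyclic_weight n f = (\<Sum>Q \<in> Ob f ` {1..n}. wt f Q)"
proof -
  have p: "permutation f" using assms finite_atLeastAtMost permutation_permutes by blast
  have reps: "cycle_reps n f = {x \<in> {1..n}. \<forall>y \<in> Ob f x. x \<le> y}"
    unfolding cycle_reps_def Ob_def by auto
  have inj: "inj_on (Ob f) (cycle_reps n f)"
  proof (rule inj_onI)
    fix x y assume "x \<in> cycle_reps n f" "y \<in> cycle_reps n f" "Ob f x = Ob f y"
    then show "x = y" unfolding reps using self_Ob by (metis (no_types, lifting) antisym mem_Collect_eq)
  qed
  have img: "Ob f ` cycle_reps n f = Ob f ` {1..n}"
  proof
    show "Ob f ` cycle_reps n f \<subseteq> Ob f ` {1..n}" unfolding reps by auto
    show "Ob f ` {1..n} \<subseteq> Ob f ` cycle_reps n f"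
    proof
      fix Q assume "Q \<in> Ob f ` {1..n}"
      then obtain x where x: "x \<in> {1..n}" "Q = Ob f x" by auto
      define m where "m = Min (Ob f x)"
      have fin: "finite (Ob f x)" using finite_Ob[OF p] .
      have mO: "m \<in> Ob f x" unfolding m_def using fin self_Ob by (metis Min_in empty_iff)
      have Om: "Ob f m = Ob f x" using Ob_mem[OF p mO] .
      have "m \<in> {1..n}" using Ob_sub[OF assms x(1)] mO by auto
      moreover have "\<forall>y\<in>Ob f m. m \<le> y" using Om fin m_def by simp
      ultimately have "m \<in> cycle_reps n f" unfolding reps by simp
      then show "Q \<in> Ob f ` cycle_reps n f" using Om x by auto
    qed
  qed
  have "cyclic_weight n f = (\<Sum>x\<in>cycle_reps n f. wt f (Ob f x))"
    unfolding cyclic_weight_def cyc_weight_cycle_def wt_def cdes_eq[OF p] by simp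
  also have "\<dots> = (\<Sum>Q \<in> Ob f ` cycle_reps n f. wt f Q)"
    by (simp add: sum.reindex[OF inj])
  finally show ?thesis by (simp only: img)
qed

lemma odd_eq: assumes "permutation f" shows "odd_order n f \<longleftrightarrow> (\<forall>x\<in>{1..n}. odd (card (Ob f x)))"
  unfolding odd_order_def card_Ob[OF assms] ..




abbreviation tau :: "nat \<Rightarrow> nat" where "tau \<equiv> Transposition.transpose 2 3"

lemma tau_tau[simp]: "tau (tau x) = x" by simp

lemma tau_less: "\<not> (a = 2 \<and> b = 3) \<Longrightarrow> \<not> (a = 3 \<and> b = 2) \<Longrightarrow> (tau a < tau b \<longleftrightarrow> a < b)"
  by (auto simp: transpose_def)

lemma conj_lemma:
  assumes f: "f permutes {1..n}" and n: "3 \<le> n" and f2: "f 2 \<noteq> 3" and f3: "f 3 \<noteq> 2"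
  shows "tau \<circ> f \<circ> tau permutes {1..n}"
    "odd_order n (tau \<circ> f \<circ> tau) = odd_order n f"
    "cyclic_weight n (tau \<circ> f \<circ> tau) = cyclic_weight n f"
proof -
  define g where "g = tau \<circ> f \<circ> tau"
  let ?S = "{1..n}"
  have t: "tau permutes ?S" using n by (intro permutes_swap_id) auto
  have g: "g permutes ?S" unfolding g_def by (intro permutes_compose f t)
  then show "tau \<circ> f \<circ> tau permutes {1..n}" by (simp add: g_def)
  have pf: "permutation f" using f finite_atLeastAtMost permutation_permutes by blast
  have pg: "permutation g" using g finite_atLeastAtMost permutation_permutes by blast
  have gk: "(g^^k) x = tau ((f^^k) (tau x))" for k x
    by (induct k) (simp_all add: g_def)
  have Ob: "Ob g x = tau ` Ob f (tau x)" for x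
    unfolding Ob_def by (auto simp: gk image_iff)
  have tS: "tau ` ?S = ?S" using t permutes_image by blast
  have cardOb: "card (Ob g x) = card (Ob f (tau x))" for x
    unfolding Ob by (rule card_image) (simp add: inj_on_transpose)
  have "odd_order n g \<longleftrightarrow> (\<forall>x\<in>?S. odd (card (Ob f (tau x))))"
    using odd_eq[OF pg] cardOb by simp
  also have "\<dots> \<longleftrightarrow> (\<forall>x\<in>tau ` ?S. odd (card (Ob f x)))" by simp
  also have "\<dots> \<longleftrightarrow> odd_order n f" using odd_eq[OF pf] tS by simp
  finally show "odd_order n (tau \<circ> f \<circ> tau) = odd_order n f" by (simp add: g_def)
  have img: "Ob g ` ?S = (\<lambda>Q. tau ` Q) ` (Ob f ` ?S)"
  proof -
    have "Ob g ` ?S = (\<lambda>x. tau ` Ob f (tau x)) ` ?S" using Ob by simp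
    also have "\<dots> = (\<lambda>x. tau ` Ob f x) ` (tau ` ?S)" by (simp add: image_image)
    also have "\<dots> = (\<lambda>Q. tau ` Q) ` (Ob f ` ?S)" using tS by (simp add: image_image)
    finally show ?thesis .
  qed
  have inj: "inj_on (\<lambda>Q. tau ` Q) (Ob f ` ?S)"
    by (rule inj_onI) (metis image_inv_f_f inj_transpose)
  have wt: "wt g (tau ` Q) = wt f Q" for Q
  proof -
    have ne: "\<not> (f u = 2 \<and> u = 3)" "\<not> (f u = 3 \<and> u = 2)" for u using f2 f3 by auto
    have gt: "g (tau u) = tau (f u)" for u by (simp add: g_def)
    have s1: "{y \<in> tau ` Q. g y < y} = tau ` {u \<in> Q. f u < u}"
    proof -
      have "{y \<in> tau ` Q. g y < y} = tau ` {u \<in> Q. g (tau u) < tau u}" by (auto simp: image_iff)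
      also have "{u \<in> Q. g (tau u) < tau u} = {u \<in> Q. f u < u}" using gt tau_less[OF ne] by simp
      finally show ?thesis .
    qed
    have s2: "{y \<in> tau ` Q. y < g y} = tau ` {u \<in> Q. u < f u}"
    proof -
      have "{y \<in> tau ` Q. y < g y} = tau ` {u \<in> Q. tau u < g (tau u)}" by (auto simp: image_iff)
      also have "{u \<in> Q. tau u < g (tau u)} = {u \<in> Q. u < f u}"
        using gt tau_less ne by (metis (no_types, lifting))
      finally show ?thesis .
    qed
    show ?thesis unfolding wt_def s1 s2
      by (simp add: card_image inj_on_transpose)
  qed
  have "cyclic_weight n g = (\<Sum>Q \<in> Ob g ` ?S. wt g Q)" by (rule cw_eq[OF g])
  also have "\<dots> = (\<Sum>Q \<in> Ob f ` ?S. wt g (tau ` Q))" unfolding img sum.reindex[OF inj] comp_def by (rule refl)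
  also have "\<dots> = (\<Sum>Q \<in> Ob f ` ?S. wt f Q)" using wt by simp
  also have "\<dots> = cyclic_weight n f" by (rule cw_eq[OF f, symmetric])
  finally show "cyclic_weight n (tau \<circ> f \<circ> tau) = cyclic_weight n f" by (simp add: g_def)
qed



definition Rm :: "nat \<Rightarrow> nat \<Rightarrow> (nat \<Rightarrow> nat) \<Rightarrow> nat \<Rightarrow> nat" where
  "Rm a b f v = (if v \<notin> Ob f 1 then f v else if v = 1 then f 1 else if v = f 1 then b
     else if v = b then a else if v = a then inv f 1 else if v = f b then 1 else inv f v)"

lemma card_filter_sum: "finite A \<Longrightarrow> card {v \<in> A. P v} = (\<Sum>v\<in>A. if P v then 1 else 0)"
  by (simp add: sum.inter_filter[symmetric])

lemma R_props:
  assumes f: "f permutes {1..n}" and n: "4 \<le> n" and odd: "odd_order n f"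
    and f1: "f 1 = n" and fn: "f n = a" and fa: "f a = b"
    and ab: "(a = 2 \<and> b = 3) \<or> (a = 3 \<and> b = 2)"
  shows "Rm a b f permutes {1..n}" "odd_order n (Rm a b f) = odd_order n f"
    "cyclic_weight n (Rm a b f) = cyclic_weight n f"
    "Rm a b f 1 = n" "Rm a b f n = b" "Rm a b f b = a" "Rm b a (Rm a b f) = f"
proof -
  let ?S = "{1..n}"
  define C where "C = Ob f 1"
  define g where "g = Rm a b f"
  define x0 where "x0 = inv f 1"
  define y0 where "y0 = f b"
  have pf: "permutation f" using f finite_atLeastAtMost permutation_permutes by blast
  have bf: "bij f" using f permutes_bij by blast
  have injf: "inj f" using bf bij_is_inj by blast
  have fx0: "f x0 = 1" unfolding x0_def using bf by (simp add: bij_is_surj surj_f_inv_f)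
  have invf: "inv f (f u) = u" for u using injf by simp
  have inS: "1 \<in> ?S" "n \<in> ?S" "a \<in> ?S" "b \<in> ?S" using n ab by auto
  have fS: "f u \<in> ?S" if "u \<in> ?S" for u using permutes_in_image[OF f] that by blast
  have ifS: "inv f u \<in> ?S" if "u \<in> ?S" for u using permutes_in_image[OF permutes_inv[OF f]] that by blast
  have CS: "C \<subseteq> ?S" unfolding C_def by (rule Ob_sub[OF f inS(1)])
  have finC: "finite C" unfolding C_def by (rule finite_Ob[OF pf])
  have fC: "u \<in> C \<Longrightarrow> f u \<in> C" for u unfolding C_def by (rule f_Ob)
  have ifC: "u \<in> C \<Longrightarrow> inv f u \<in> C" for u unfolding C_def by (rule inv_Ob[OF pf])
  have inC: "1 \<in> C" "n \<in> C" "a \<in> C" "b \<in> C" "y0 \<in> C" "x0 \<in> C"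
    using self_Ob[of 1 f] fC f1 fn fa ifC unfolding C_def y0_def x0_def by metis+
  have d: "1 \<noteq> n" "1 \<noteq> a" "1 \<noteq> b" "n \<noteq> a" "n \<noteq> b" "a \<noteq> b" "a \<in> {2,3}" "b \<in> {2,3}"
    using n ab by auto
  have oddC: "odd (card C)" using odd_eq[OF pf] odd inS unfolding C_def by blast
  have c4: "card {1,n,a,b} = 4" using d by auto
  have C4: "4 \<le> card C" using card_mono[OF finC, of "{1,n,a,b}"] inC c4 by auto
  have y1: "y0 \<noteq> 1"
  proof
    assume "y0 = 1"
    then have "(f^^4) 1 = 1" using f1 fn fa unfolding y0_def by (simp add: numeral_eq_Suc)
    then have "orbit_len f 1 \<le> 4" by (intro ol_le) auto
    then have "card C \<le> 4" unfolding C_def card_Ob[OF pf] .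
    with C4 have "card C = 4" by simp
    with oddC show False by simp
  qed
  have y0d: "y0 \<noteq> n" "y0 \<noteq> a" "y0 \<noteq> b" unfolding y0_def
    using injf f1 fn fa d by (metis inj_eq)+
  have x0d: "x0 \<noteq> 1" "x0 \<noteq> n" "x0 \<noteq> a" "x0 \<noteq> b"
    using fx0 f1 fn fa d y1 unfolding y0_def by auto
  have xyS: "x0 \<in> ?S" "y0 \<in> ?S" using inC CS by auto
  have x4: "4 \<le> x0" "4 \<le> y0" using x0d y0d y1 ab xyS by auto
  have dd: "n \<noteq> 1" "a \<noteq> 1" "b \<noteq> 1" "a \<noteq> n" "b \<noteq> n" "b \<noteq> a" "1 \<noteq> y0" "n \<noteq> y0" "a \<noteq> y0" "b \<noteq> y0"
    using d y1 y0d by auto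
  have inC': "1 \<in> Ob f 1" "n \<in> Ob f 1" "a \<in> Ob f 1" "b \<in> Ob f 1" "y0 \<in> Ob f 1"
    using inC unfolding C_def by auto
  have g1: "g 1 = n" unfolding g_def Rm_def using inC' f1 by simp
  have gn: "g n = b" unfolding g_def Rm_def using inC' f1 d dd by simp
  have gb: "g b = a" unfolding g_def Rm_def using inC' f1 d dd by simp
  have ga: "g a = x0" unfolding g_def Rm_def x0_def using inC' f1 d dd by simp
  have gy: "g y0 = 1" unfolding g_def Rm_def using inC' f1 d dd y1 y0d unfolding y0_def by simp
  have gout: "g v = f v" if "v \<notin> C" for v using that unfolding g_def Rm_def C_def by simp
  have gin: "g v = inv f v" if "v \<in> C" "v \<notin> {1,n,a,b,y0}" for v
  proof -
    have h: "v \<in> Ob f 1" "v \<noteq> 1" "v \<noteq> f 1" "v \<noteq> b" "v \<noteq> a" "v \<noteq> f b"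
      using that f1 unfolding C_def y0_def by auto
    show ?thesis unfolding g_def Rm_def using h by (simp only: if_False if_True simp_thms not_False_eq_True)
  qed
  have gC: "g v \<in> C" if "v \<in> C" for v
  proof (cases "v \<in> {1,n,a,b,y0}")
    case True
    then show ?thesis using g1 gn gb ga gy inC by auto
  next
    case False
    then show ?thesis using gin[OF that False] ifC[OF that] by simp
  qed
  have gf: "g (f u) = u" if "u \<in> C" "u \<notin> {x0,1,n,a,b}" for u
  proof -
    have A: "f u \<notin> f ` {x0,1,n,a,b}" using that by (simp add: inj_eq[OF injf])
    have B: "{1,n,a,b,y0} = f ` {x0,1,n,a,b}" using fx0 f1 fn fa by (simp add: y0_def)
    have "f u \<notin> {1,n,a,b,y0}" unfolding B by (rule A)
    then show ?thesis using gin[of "f u"] fC that invf by simp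
  qed
  have gS: "g v \<in> ?S" if "v \<in> ?S" for v
  proof (cases "v \<in> C")
    case True then show ?thesis using gC[OF True] CS by blast
  next
    case False then show ?thesis using gout[OF False] fS[OF that] by simp
  qed
  have surj: "?S \<subseteq> g ` ?S"
  proof
    fix w assume w: "w \<in> ?S"
    show "w \<in> g ` ?S"
    proof (cases "w \<in> C")
      case False
      have "inv f w \<notin> C" using False fC bf by (metis bij_inv_eq_iff)
      then have "g (inv f w) = w" using gout bf by (simp add: bij_is_surj surj_f_inv_f)
      then show ?thesis using ifS[OF w] by (metis imageI)
    next
      case True
      show ?thesis
      proof (cases "w \<in> {x0,1,n,a,b}")
        case True
        then have "w = g a \<or> w = g y0 \<or> w = g 1 \<or> w = g n \<or> w = g b"
          using ga gy g1 gn gb by auto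
        moreover have "y0 \<in> ?S" using xyS by simp
        ultimately show ?thesis using inS by blast
      next
        case False
        then have "g (f w) = w" using gf \<open>w \<in> C\<close> by blast
        then show ?thesis using fS[OF w] by (metis imageI)
      qed
    qed
  qed
  have gimg: "g ` ?S = ?S" using surj gS by blast
  have injg: "inj_on g ?S" by (rule finite_surj_inj[OF finite_atLeastAtMost surj])
  have gfix: "g v = v" if "v \<notin> ?S" for v
  proof -
    have "v \<notin> C" using that CS by blast
    then show ?thesis using gout f that by (simp add: permutes_not_in)
  qed
  have gbij: "bij_betw g ?S ?S" unfolding bij_betw_def using injg gimg by blast
  have gperm: "g permutes ?S" using bij_imp_permutes[OF gbij] gfix by blast
  then show "Rm a b f permutes {1..n}" by (simp add: g_def)
  have pg: "permutation g" using gperm finite_atLeastAtMost permutation_permutes by blast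
  have bg: "bij g" using gperm permutes_bij by blast
  let ?L = "orbit_len f 1"
  define c where "c k = (f^^k) 1" for k
  have Ceq: "C = c ` {..<?L}" unfolding C_def c_def by (rule Ob_eq[OF pf])
  have cinj: "inj_on c {..<?L}" unfolding c_def by (rule ol_inj[OF pf])
  have Lc: "card C = ?L" unfolding C_def by (rule card_Ob[OF pf])
  have L5: "5 \<le> ?L" using C4 oddC Lc by presburger
  have cv: "c 0 = 1" "c 1 = n" "c 2 = a" "c 3 = b" "c 4 = y0"
    unfolding c_def y0_def using f1 fn fa by (simp_all add: numeral_eq_Suc)
  have cS: "c (Suc k) = f (c k)" for k unfolding c_def by simp
  have cL: "c ?L = 1" unfolding c_def by (rule ol_props(2)[OF pf])
  have cLm: "c (?L - 1) = x0"
  proof -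
    have "f (c (?L - 1)) = 1" using cS[of "?L - 1"] cL L5 by (metis Suc_diff_1 less_le_trans zero_less_numeral)
    then show ?thesis unfolding x0_def using injf by (metis inv_f_eq)
  qed
  have ObgC: "Ob g 1 = C"
  proof
    have "(g^^k) 1 \<in> C" for k by (induct k) (use inC(1) gC in simp_all)
    then show "Ob g 1 \<subseteq> C" unfolding Ob_def by auto
  next
    have o1: "1 \<in> Ob g 1" by (rule self_Ob)
    have on: "n \<in> Ob g 1" using f_Ob[OF o1] g1 by simp
    have ob: "b \<in> Ob g 1" using f_Ob[OF on] gn by simp
    have oa: "a \<in> Ob g 1" using f_Ob[OF ob] gb by simp
    have ox: "x0 \<in> Ob g 1" using f_Ob[OF oa] ga by simp
    have down: "j + 4 < ?L \<longrightarrow> c (?L - 1 - j) \<in> Ob g 1" for j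
    proof (induct j)
      case 0 then show ?case using ox cLm by simp
    next
      case (Suc j)
      show ?case
      proof
        assume j: "Suc j + 4 < ?L"
        define k where "k = ?L - 1 - j"
        have k: "5 \<le> k" "k < ?L" using j unfolding k_def by auto
        have ck: "c k \<in> Ob g 1" using Suc j unfolding k_def by simp
        have ckC: "c k \<in> C" using Ceq k by auto
        have ne: "c k \<noteq> c i" if "i < 5" for i
          using cinj k that by (metis inj_on_eq_iff lessThan_iff less_trans not_le order_less_le_trans) 
        have "c k \<notin> {1,n,a,b,y0}" using ne[of 0] ne[of 1] ne[of 2] ne[of 3] ne[of 4] cv by simp
        then have gck: "g (c k) = inv f (c k)" using gin ckC by blast
        have ckm: "c k = f (c (k - 1))" using cS[of "k-1"] k by simp
        have "g (c k) = c (k - 1)" using gck ckm invf by simp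
        then have "c (k - 1) \<in> Ob g 1" using f_Ob[OF ck] by simp
        moreover have "k - 1 = ?L - 1 - Suc j" unfolding k_def by simp
        ultimately show "c (?L - 1 - Suc j) \<in> Ob g 1" by simp
      qed
    qed
    show "C \<subseteq> Ob g 1"
    proof
      fix w assume "w \<in> C"
      then obtain k where k: "k < ?L" "w = c k" using Ceq by auto
      show "w \<in> Ob g 1"
      proof (cases "k < 4")
        case True
        then have "k = 0 \<or> k = 1 \<or> k = 2 \<or> k = 3" by auto
        then show ?thesis using k cv o1 on oa ob by auto
      next
        case False
        then have "(?L - 1 - k) + 4 < ?L" using k by auto
        then show ?thesis using down[of "?L - 1 - k"] k False by simp
      qed
    qed
  qed
  have ObEq: "Ob g v = Ob f v" for v
  proof (cases "v \<in> C")
    case True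
    then have "v \<in> Ob g 1" using ObgC by simp
    then have "Ob g v = C" using Ob_mem[OF pg, of v 1] ObgC by simp
    moreover have "Ob f v = C" using Ob_mem[OF pf, of v 1] True unfolding C_def by simp
    ultimately show ?thesis by simp
  next
    case False
    have nc: "(f^^k) v \<notin> C" for k
    proof
      assume "(f^^k) v \<in> C"
      then have "Ob f ((f^^k) v) = C" using Ob_mem[OF pf] unfolding C_def by simp
      then have "Ob f v = C" using Ob_funpow[OF pf] by simp
      then show False using False self_Ob[of v f] by simp
    qed
    have "(g^^k) v = (f^^k) v" for k by (induct k) (simp_all add: gout nc)
    then show ?thesis unfolding Ob_def by simp
  qed
  have ObEq': "Ob g = Ob f" using ObEq by blast
  show "odd_order n (Rm a b f) = odd_order n f"
    using odd_eq[OF pg] odd_eq[OF pf] ObEq' unfolding g_def by simp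
  define T where "T = {1,n,a,b,y0}"
  define T' where "T' = {x0,1,n,a,b}"
  have TC: "T \<subseteq> C" "T' \<subseteq> C" unfolding T_def T'_def using inC by auto
  have fimg: "f ` (C - T') = C - T"
  proof
    show "f ` (C - T') \<subseteq> C - T"
    proof
      fix w assume "w \<in> f ` (C - T')"
      then obtain u where u: "u \<in> C" "u \<notin> T'" "w = f u" by auto
      have A: "f u \<notin> f ` T'" using u unfolding T'_def by (simp add: inj_eq[OF injf])
      have B: "T = f ` T'" using fx0 f1 fn fa unfolding T_def T'_def by (simp add: y0_def)
      have "f u \<notin> T" unfolding B by (rule A)
      then show "w \<in> C - T" using u fC by auto
    qed
    show "C - T \<subseteq> f ` (C - T')"
    proof
      fix w assume w: "w \<in> C - T"
      have fw: "f (inv f w) = w" using bf by (simp add: bij_is_surj surj_f_inv_f)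
      have "inv f w \<notin> T'" using w fx0 f1 fn fa fw unfolding T_def T'_def y0_def by auto
      moreover have "inv f w \<in> C" using w ifC by auto
      ultimately show "w \<in> f ` (C - T')" using fw by (metis DiffI imageI)
    qed
  qed
  have injCT: "inj_on f (C - T')" using injf inj_on_subset subset_UNIV by blast
  have gfT: "g (f u) = u" if "u \<in> C - T'" for u using gf that unfolding T'_def by blast
  have finT: "finite T" "finite T'" unfolding T_def T'_def by auto
  have split: "(\<Sum>v\<in>C. h v) = (\<Sum>v\<in>C - X. h v) + (\<Sum>v\<in>X. h v)" if "X \<subseteq> C" for h :: "nat \<Rightarrow> nat" and X
    using sum.subset_diff[OF that finC] by simp
  have reidx: "(\<Sum>v\<in>C - T. h v) = (\<Sum>u\<in>C - T'. h (f u))" for h :: "nat \<Rightarrow> nat"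
    using sum.reindex[OF injCT, of h] fimg by simp
  have xyd: "x0 \<noteq> 1" "x0 \<noteq> n" "x0 \<noteq> a" "x0 \<noteq> b" "y0 \<noteq> 1" "y0 \<noteq> n" "y0 \<noteq> a" "y0 \<noteq> b"
    using x0d y1 y0d by auto
  have fy: "f b = y0" unfolding y0_def ..
  have sT1: "(\<Sum>v\<in>T. if g v < v then 1 else 0) = (\<Sum>v\<in>T'. if v < f v then 1 else (0::nat))"
    using ab x4 n xyd g1 gn gb ga gy f1 fn fa fx0 fy unfolding T_def T'_def by auto
  have sT2: "(\<Sum>v\<in>T. if v < g v then 1 else 0) = (\<Sum>v\<in>T'. if f v < v then 1 else (0::nat))"
    using ab x4 n xyd g1 gn gb ga gy f1 fn fa fx0 fy unfolding T_def T'_def by auto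
  have DA: "card {v \<in> C. g v < v} = card {v \<in> C. v < f v}"
  proof -
    have "card {v \<in> C. g v < v} = (\<Sum>v\<in>C - T. if g v < v then 1 else 0) + (\<Sum>v\<in>T. if g v < v then 1 else 0)"
      using card_filter_sum[OF finC] split[OF TC(1)] by simp
    also have "(\<Sum>v\<in>C - T. if g v < v then 1 else 0) = (\<Sum>u\<in>C - T'. if u < f u then 1 else (0::nat))"
      using reidx gfT by simp
    also have "\<dots> + (\<Sum>v\<in>T. if g v < v then 1 else 0) = card {v \<in> C. v < f v}"
      using card_filter_sum[OF finC] split[OF TC(2)] sT1 by simp
    finally show ?thesis .
  qed
  have AD: "card {v \<in> C. v < g v} = card {v \<in> C. f v < v}"
  proof -
    have "card {v \<in> C. v < g v} = (\<Sum>v\<in>C - T. if v < g v then 1 else 0) + (\<Sum>v\<in>T. if v < g v then 1 else 0)"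
      using card_filter_sum[OF finC] split[OF TC(1)] by simp
    also have "(\<Sum>v\<in>C - T. if v < g v then 1 else 0) = (\<Sum>u\<in>C - T'. if f u < u then 1 else (0::nat))"
      using reidx gfT by simp
    also have "\<dots> + (\<Sum>v\<in>T. if v < g v then 1 else 0) = card {v \<in> C. f v < v}"
      using card_filter_sum[OF finC] split[OF TC(2)] sT2 by simp
    finally show ?thesis .
  qed
  have wtC: "wt g C = wt f C" unfolding wt_def DA AD by simp
  have wtQ: "wt g Q = wt f Q" if Qin: "Q \<in> Ob f ` ?S" for Q
  proof -
    obtain v where v: "Q = Ob f v" using Qin by auto
    show ?thesis
    proof (cases "v \<in> C")
      case True
      then have "Q = C" using v Ob_mem[OF pf] unfolding C_def by simp
      then show ?thesis using wtC by simp
    next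
      case False
      have "u \<notin> C" if "u \<in> Q" for u
      proof
        assume "u \<in> C"
        then have "Ob f u = C" using Ob_mem[OF pf] unfolding C_def by simp
        moreover have "Ob f u = Q" using that v Ob_mem[OF pf] by simp
        ultimately show False using False v self_Ob[of v f] by simp
      qed
      then have "\<forall>u\<in>Q. g u = f u" using gout by simp
      then have "{y \<in> Q. g y < y} = {y \<in> Q. f y < y}" "{y \<in> Q. y < g y} = {y \<in> Q. y < f y}"
        by auto
      then show ?thesis unfolding wt_def by simp
    qed
  qed
  have "cyclic_weight n g = (\<Sum>Q \<in> Ob f ` ?S. wt g Q)" using cw_eq[OF gperm] ObEq' by simp
  also have "\<dots> = (\<Sum>Q \<in> Ob f ` ?S. wt f Q)" using wtQ by (rule sum.cong[OF refl])
  also have "\<dots> = cyclic_weight n f" by (rule cw_eq[OF f, symmetric])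
  finally show "cyclic_weight n (Rm a b f) = cyclic_weight n f" by (simp add: g_def)
  show "Rm a b f 1 = n" "Rm a b f n = b" "Rm a b f b = a" using g1 gn gb by (simp_all add: g_def)
  have ig1: "inv g 1 = y0" using bg gy by (simp add: bij_is_inj inv_f_eq)
  have igv: "inv g v = f v" if "v \<in> C" "v \<notin> {x0,1,n,a,b}" for v
    using gf[OF that] bg by (simp add: bij_is_inj inv_f_eq)
  show "Rm b a (Rm a b f) = f"
  proof
    fix v
    show "Rm b a (Rm a b f) v = f v"
      unfolding g_def[symmetric] Rm_def ObgC[unfolded C_def]
      using gout[of v] g1 fn fa ig1 ga fx0 igv[of v] f1 unfolding C_def y0_def
      by auto
  qed
qed



lemma p_main:
  assumes n: "4 \<le> n"
  shows "p_count n d 1 2 = p_count n d 1 3"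
proof -
  let ?S = "{1..n}"
  define P where "P j = {f. f permutes ?S \<and> odd_order n f \<and> int (cyclic_weight n f) = d \<and> f 1 = n \<and> f n = j}" for j
  have fin: "finite (P j)" for j
    unfolding P_def by (rule finite_subset[OF _ finite_permutations[OF finite_atLeastAtMost, of 1 n]]) auto
  define A2 where "A2 = {f \<in> P 2. f 2 \<noteq> 3}"
  define B2 where "B2 = {f \<in> P 2. f 2 = 3}"
  define A3 where "A3 = {f \<in> P 3. f 3 \<noteq> 2}"
  define B3 where "B3 = {f \<in> P 3. f 3 = 2}"
  have s2: "card (P 2) = card A2 + card B2"
  proof -
    have "P 2 = A2 \<union> B2" "A2 \<inter> B2 = {}" unfolding A2_def B2_def by auto
    then show ?thesis using fin[of 2] card_Un_disjoint[of A2 B2]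
      by (metis finite_Un)
  qed
  have s3: "card (P 3) = card A3 + card B3"
  proof -
    have "P 3 = A3 \<union> B3" "A3 \<inter> B3 = {}" unfolding A3_def B3_def by auto
    then show ?thesis using fin[of 3] card_Un_disjoint[of A3 B3]
      by (metis finite_Un)
  qed
  have t1: "tau 1 = 1" "tau n = n" "tau 2 = 3" "tau 3 = 2" using n by (auto simp: transpose_def)
  have injP: "inj f" if "f permutes ?S" for f using that permutes_inj by blast
  have conjA: "(tau \<circ> f \<circ> tau) \<in> A3" if "f \<in> A2" for f
  proof -
    have f: "f permutes ?S" "odd_order n f" "int (cyclic_weight n f) = d" "f 1 = n" "f n = 2" "f 2 \<noteq> 3"
      using that unfolding A2_def P_def by auto
    have f3: "f 3 \<noteq> 2"
    proof
      assume "f 3 = 2" then have "f 3 = f n" using f(5) by simp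
      then have "3 = n" by (simp add: inj_eq[OF injP[OF f(1)]])
      then show False using n by simp
    qed
    note c = conj_lemma[OF f(1) _ f(6) f3]
    show ?thesis unfolding A3_def P_def using c n f t1 by (auto simp: transpose_def)
  qed
  have conjB: "(tau \<circ> f \<circ> tau) \<in> A2" if "f \<in> A3" for f
  proof -
    have f: "f permutes ?S" "odd_order n f" "int (cyclic_weight n f) = d" "f 1 = n" "f n = 3" "f 3 \<noteq> 2"
      using that unfolding A3_def P_def by auto
    have f2: "f 2 \<noteq> 3"
    proof
      assume "f 2 = 3" then have "f 2 = f n" using f(5) by simp
      then have "2 = n" by (simp add: inj_eq[OF injP[OF f(1)]])
      then show False using n by simp
    qed
    note c = conj_lemma[OF f(1) _ f2 f(6)]
    show ?thesis unfolding A2_def P_def using c n f t1 by (auto simp: transpose_def)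
  qed
  have cA: "card A2 = card A3"
  proof (rule bij_betw_same_card[of "\<lambda>f. tau \<circ> f \<circ> tau"], rule bij_betw_byWitness[where f'="\<lambda>f. tau \<circ> f \<circ> tau"])
    show "\<forall>f\<in>A2. tau \<circ> (tau \<circ> f \<circ> tau) \<circ> tau = f" by (auto simp: fun_eq_iff)
    show "\<forall>f\<in>A3. tau \<circ> (tau \<circ> f \<circ> tau) \<circ> tau = f" by (auto simp: fun_eq_iff)
    show "(\<lambda>f. tau \<circ> f \<circ> tau) ` A2 \<subseteq> A3" using conjA by blast
    show "(\<lambda>f. tau \<circ> f \<circ> tau) ` A3 \<subseteq> A2" using conjB by blast
  qed
  have RB: "Rm 2 3 f \<in> B3 \<and> Rm 3 2 (Rm 2 3 f) = f" if "f \<in> B2" for f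
  proof -
    have f: "f permutes ?S" "odd_order n f" "int (cyclic_weight n f) = d" "f 1 = n" "f n = 2" "f 2 = 3"
      using that unfolding B2_def P_def by auto
    note r = R_props[OF f(1) n f(2) f(4) f(5) f(6)]
    show ?thesis unfolding B3_def P_def using r f by auto
  qed
  have RB': "Rm 3 2 f \<in> B2 \<and> Rm 2 3 (Rm 3 2 f) = f" if "f \<in> B3" for f
  proof -
    have f: "f permutes ?S" "odd_order n f" "int (cyclic_weight n f) = d" "f 1 = n" "f n = 3" "f 3 = 2"
      using that unfolding B3_def P_def by auto
    note r = R_props[OF f(1) n f(2) f(4) f(5) f(6)]
    show ?thesis unfolding B2_def P_def using r f by auto
  qed
  have cB: "card B2 = card B3"
  proof (rule bij_betw_same_card[of "Rm 2 3"], rule bij_betw_byWitness[where f'="Rm 3 2"])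
    show "\<forall>f\<in>B2. Rm 3 2 (Rm 2 3 f) = f" using RB by blast
    show "\<forall>f\<in>B3. Rm 2 3 (Rm 3 2 f) = f" using RB' by blast
    show "Rm 2 3 ` B2 \<subseteq> B3" using RB by blast
    show "Rm 3 2 ` B3 \<subseteq> B2" using RB' by blast
  qed
  have "p_count n d 1 2 = card (P 2)" unfolding p_count_def P_def by simp
  also have "\<dots> = card (P 3)" using s2 s3 cA cB by simp
  also have "\<dots> = p_count n d 1 3" unfolding p_count_def P_def by simp
  finally show ?thesis .
qed



fun dsc :: "nat list \<Rightarrow> nat" where
  "dsc [] = 0"
| "dsc (a # xs) = (if xs \<noteq> [] \<and> hd xs < a then 1 else 0) + dsc xs"

fun asc :: "nat list \<Rightarrow> nat" where
  "asc [] = 0"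
| "asc (a # xs) = (if xs \<noteq> [] \<and> a < hd xs then 1 else 0) + asc xs"

lemma nat_set_split: "{t::nat. Q t} = (if Q 0 then {0} else {}) \<union> Suc ` {t. Q (Suc t)}"
proof (rule set_eqI)
  fix t show "t \<in> {t::nat. Q t} \<longleftrightarrow> t \<in> (if Q 0 then {0} else {}) \<union> Suc ` {t. Q (Suc t)}"
    by (cases t) auto
qed

lemma cnt_cons:
  "card {t. Suc t < length (a#xs) \<and> P ((a#xs)!t) ((a#xs)!Suc t)} =
   (if xs \<noteq> [] \<and> P a (hd xs) then 1 else 0) + card {t. Suc t < length xs \<and> P (xs!t) (xs!Suc t)}"
proof -
  let ?B = "{t. Suc t < length xs \<and> P (xs!t) (xs!Suc t)}"
  have e: "{t. Suc t < length (a#xs) \<and> P ((a#xs)!t) ((a#xs)!Suc t)} =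
     (if xs \<noteq> [] \<and> P a (hd xs) then {0} else {}) \<union> Suc ` ?B"
    by (subst nat_set_split) (cases xs, auto)
  have fin: "finite ?B" by (rule finite_subset[of _ "{..<length xs}"]) auto
  show ?thesis unfolding e
    by (subst card_Un_disjoint) (auto simp: fin card_image)
qed

lemma des_eq: "des_count w = dsc w"
proof (induct w)
  case Nil show ?case by (simp add: des_count_def)
next
  case (Cons a w)
  have "des_count (a#w) = (if w \<noteq> [] \<and> hd w < a then 1 else 0) + des_count w"
    unfolding des_count_def using cnt_cons[where P="\<lambda>x y. y < x" and a=a and xs=w] by simp
  then show ?case using Cons by simp
qed

lemma asc_eq: "asc_count w = asc w"
proof (induct w)
  case Nil show ?case by (simp add: asc_count_def)
next
  case (Cons a w)
  have "asc_count (a#w) = (if w \<noteq> [] \<and> a < hd w then 1 else 0) + asc_count w"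
    unfolding asc_count_def using cnt_cons[where P="\<lambda>x y. x < y" and a=a and xs=w] by simp
  then show ?case using Cons by simp
qed

definition ht :: "nat list \<Rightarrow> int" where "ht w = int (asc w) - int (dsc w)"

lemma height_eq: "height w = ht w" by (simp add: height_def ht_def des_eq asc_eq)

lemma dsc_append: "dsc (xs @ ys) = dsc xs + dsc ys + (if xs \<noteq> [] \<and> ys \<noteq> [] \<and> hd ys < last xs then 1 else 0)"
  by (induct xs) auto

lemma asc_append: "asc (xs @ ys) = asc xs + asc ys + (if xs \<noteq> [] \<and> ys \<noteq> [] \<and> last xs < hd ys then 1 else 0)"
  by (induct xs) auto

lemma ht_append: "ht (xs @ ys) = ht xs + ht ys + (if xs \<noteq> [] \<and> ys \<noteq> [] \<and> last xs < hd ys then 1 else 0)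
   - (if xs \<noteq> [] \<and> ys \<noteq> [] \<and> hd ys < last xs then 1 else 0)"
  unfolding ht_def dsc_append asc_append by simp

lemma ballot_eq: "ballot w \<longleftrightarrow> (\<forall>t\<le>length w. 0 \<le> ht (take t w))"
  by (simp add: ballot_def height_eq)

lemma all_take_append:
  "(\<forall>t\<le>length (xs@ys). P (take t (xs@ys))) \<longleftrightarrow>
   (\<forall>t\<le>length xs. P (take t xs)) \<and> (\<forall>k\<le>length ys. P (xs @ take k ys))"
proof safe
  fix t assume "\<forall>t\<le>length (xs@ys). P (take t (xs@ys))" "t \<le> length xs"
  then show "P (take t xs)" by (metis le_add1 le_trans length_append take_append append_Nil2 take_eq_Nil diff_is_0_eq)
next
  fix k assume "\<forall>t\<le>length (xs@ys). P (take t (xs@ys))" "k \<le> length ys"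
  then show "P (xs @ take k ys)" by (metis add_le_mono1 add.commute add_diff_cancel_left' le_add2 length_append take_all take_append add_le_cancel_left)
next
  fix t assume a: "\<forall>t\<le>length xs. P (take t xs)" "\<forall>k\<le>length ys. P (xs @ take k ys)" "t \<le> length (xs@ys)"
  show "P (take t (xs@ys))"
  proof (cases "t \<le> length xs")
    case True then show ?thesis using a(1) by simp
  next
    case False then show ?thesis using a(2,3) by simp
  qed
qed

lemma ht_Cons: "ht (a # xs) = ht xs + (if xs \<noteq> [] \<and> a < hd xs then 1 else 0) - (if xs \<noteq> [] \<and> hd xs < a then 1 else 0)"
  unfolding ht_def by simp

lemma ht_Nil[simp]: "ht [] = 0" unfolding ht_def by simp

lemma all_le4: "(\<forall>k\<le>(4::nat). P k) \<longleftrightarrow> P 0 \<and> P 1 \<and> P 2 \<and> P 3 \<and> P 4"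
proof
  assume "\<forall>k\<le>(4::nat). P k" then show "P 0 \<and> P 1 \<and> P 2 \<and> P 3 \<and> P 4" by simp
next
  assume h: "P 0 \<and> P 1 \<and> P 2 \<and> P 3 \<and> P 4"
  show "\<forall>k\<le>(4::nat). P k"
  proof (intro allI impI)
    fix k :: nat assume "k \<le> 4"
    then have "k = 0 \<or> k = 1 \<or> k = 2 \<or> k = 3 \<or> k = 4" by arith
    then show "P k" using h by auto
  qed
qed

lemma take4: "(\<forall>k\<le>(4::nat). P (take k [a,b,c,d])) \<longleftrightarrow> P [] \<and> P [a] \<and> P [a,b] \<and> P [a,b,c] \<and> P [a,b,c,d]"
proof -
  have "take 2 [a,b,c,d] = [a,b]" "take 3 [a,b,c,d] = [a,b,c]" "take 4 [a,b,c,d] = [a,b,c,d]"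
    by (simp_all add: numeral_eq_Suc)
  then show ?thesis unfolding all_le4 by simp
qed

lemma bnd: assumes "\<forall>x\<in>set u. 4 \<le> x" shows "u \<noteq> [] \<Longrightarrow> 4 \<le> last u" "u \<noteq> [] \<Longrightarrow> 4 \<le> hd u"
  using assms by auto

lemma block_ht:
  assumes u: "\<forall>x\<in>set u. 4 \<le> x" and q: "\<forall>x\<in>set q. 4 \<le> x" and n: "4 \<le> n"
  shows "ht (u @ [1,n,2,3] @ q) = ht (u @ [2,3,n,1] @ q)"
    "ht (u @ [3,2,n,1] @ q) = ht (u @ [1,n,3,2] @ q)"
    "dsc (u @ [1,n,2,3] @ q) = dsc (u @ [2,3,n,1] @ q)"
    "dsc (u @ [3,2,n,1] @ q) = dsc (u @ [1,n,3,2] @ q)"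
  using bnd[OF u] bnd[OF q] n
  by (cases "u = []"; cases "q = []"; simp add: ht_append ht_Cons dsc_append)+

lemma hu: assumes u: "\<forall>x\<in>set u. 4 \<le> x" and a: "a \<le> 3"
  shows "ht (u @ a # xs) = ht u + ht (a # xs) - (if u = [] then 0 else 1)"
  using bnd[OF u] a by (cases "u = []") (simp_all add: ht_append)

lemma hvals: assumes n: "4 \<le> n"
  shows "ht [x] = 0" "ht [1,n] = 1" "ht [1,n,2] = 0" "ht [1,n,2,3] = 1" "ht [2,3] = 1" "ht [2,3,n] = 2"
    "ht [2,3,n,1] = 1" "ht [3,2] = -1" "ht [3,2,n] = 0" "ht [3,2,n,1] = -1" "ht [1,n,3] = 0"
    "ht [1,n,3,2] = -1"
  using n by (simp_all add: ht_Cons)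

lemma block_pre:
  assumes u: "\<forall>x\<in>set u. 4 \<le> x" and n: "4 \<le> n"
  shows "(\<forall>k\<le>4. 0 \<le> ht (u @ take k [1,n,2,3])) \<longleftrightarrow> (\<forall>k\<le>4. 0 \<le> ht (u @ take k [2,3,n,1]))"
    "(\<forall>k\<le>4. 0 \<le> ht (u @ take k [3,2,n,1])) \<longleftrightarrow> (\<forall>k\<le>4. 0 \<le> ht (u @ take k [1,n,3,2]))"
proof -
  have h1: "ht (u @ 1 # xs) = ht u + ht (1#xs) - (if u=[] then 0 else 1)" for xs by (rule hu[OF u]) simp
  have h2: "ht (u @ 2 # xs) = ht u + ht (2#xs) - (if u=[] then 0 else 1)" for xs by (rule hu[OF u]) simp
  have h3: "ht (u @ 3 # xs) = ht u + ht (3#xs) - (if u=[] then 0 else 1)" for xs by (rule hu[OF u]) simp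
  note v = hvals[OF n]
  have e: "u @ [] = u" by simp
  show "(\<forall>k\<le>4. 0 \<le> ht (u @ take k [1,n,2,3])) \<longleftrightarrow> (\<forall>k\<le>4. 0 \<le> ht (u @ take k [2,3,n,1]))"
    unfolding take4[where P="\<lambda>zs. 0 \<le> ht (u @ zs)"] e
    by (simp only: h1 h2 h3 v) (cases "u = []"; auto)
  show "(\<forall>k\<le>4. 0 \<le> ht (u @ take k [3,2,n,1])) \<longleftrightarrow> (\<forall>k\<le>4. 0 \<le> ht (u @ take k [1,n,3,2]))"
    unfolding take4[where P="\<lambda>zs. 0 \<le> ht (u @ zs)"] e
    by (simp only: h1 h2 h3 v) (cases "u = []"; auto)
qed

lemma ballot_block: "ballot (u @ B @ v) \<longleftrightarrow> (\<forall>t\<le>length u. 0 \<le> ht (take t u)) \<and>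
   (\<forall>k\<le>length B. 0 \<le> ht (u @ take k B)) \<and> (\<forall>k\<le>length v. 0 \<le> ht (u @ B @ take k v))"
  unfolding ballot_eq all_take_append[of u "B @ v" "\<lambda>zs. 0 \<le> ht zs"]
    all_take_append[of B v "\<lambda>zs. 0 \<le> ht (u @ zs)"] by simp

lemma perm_block: "set B1 = set B2 \<Longrightarrow> distinct B1 = distinct B2 \<Longrightarrow>
  is_perm_list n (u @ B1 @ v) = is_perm_list n (u @ B2 @ v)"
  unfolding is_perm_list_def by auto

lemma perm_bnd: assumes "is_perm_list n (u @ B @ v)" "{1,2,3} \<subseteq> set B"
  shows "\<forall>x\<in>set u. 4 \<le> x" "\<forall>x\<in>set v. 4 \<le> x"
proof -
  have d: "distinct (u @ B @ v)" and s: "set (u @ B @ v) = {1..n}" using assms(1) unfolding is_perm_list_def by auto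
  have key: "4 \<le> x" if h: "x \<in> set u \<or> x \<in> set v" for x
  proof -
    have "x \<notin> set B" using d h by auto
    then have "x \<noteq> 1" "x \<noteq> 2" "x \<noteq> 3" using assms(2) by auto
    moreover have "1 \<le> x" using s h by auto
    ultimately show ?thesis by arith
  qed
  then show "\<forall>x\<in>set u. 4 \<le> x" "\<forall>x\<in>set v. 4 \<le> x" by auto
qed

lemma block_equiv:
  assumes n: "4 \<le> n"
    and B: "(B1 = [1,n,2,3] \<and> B2 = [2,3,n,1]) \<or> (B1 = [3,2,n,1] \<and> B2 = [1,n,3,2])"
  shows "is_perm_list n (u@B1@v) \<longleftrightarrow> is_perm_list n (u@B2@v)"
    "is_perm_list n (u@B1@v) \<Longrightarrow> (ballot (u@B1@v) \<longleftrightarrow> ballot (u@B2@v)) \<and> dsc (u@B1@v) = dsc (u@B2@v)"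
proof -
  show "is_perm_list n (u@B1@v) \<longleftrightarrow> is_perm_list n (u@B2@v)"
    by (rule perm_block) (use B n in auto)
  assume p: "is_perm_list n (u@B1@v)"
  have sb: "{1,2,3} \<subseteq> set B1" using B by auto
  note bu = perm_bnd[OF p sb]
  have tk: "\<forall>x\<in>set (take k v). 4 \<le> x" for k using bu(2) by (meson in_set_takeD)
  have l: "length B1 = 4" "length B2 = 4" using B by auto
  have "(\<forall>k\<le>length v. 0 \<le> ht (u @ B1 @ take k v)) \<longleftrightarrow> (\<forall>k\<le>length v. 0 \<le> ht (u @ B2 @ take k v))"
    using block_ht(1,2)[OF bu(1) tk n] B by auto
  moreover have "(\<forall>k\<le>length B1. 0 \<le> ht (u @ take k B1)) \<longleftrightarrow> (\<forall>k\<le>length B2. 0 \<le> ht (u @ take k B2))"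
    using block_pre[OF bu(1) n] B l by auto
  ultimately have "ballot (u@B1@v) \<longleftrightarrow> ballot (u@B2@v)" unfolding ballot_block by simp
  moreover have "dsc (u@B1@v) = dsc (u@B2@v)" using block_ht(3,4)[OF bu n] B by auto
  ultimately show "(ballot (u@B1@v) \<longleftrightarrow> ballot (u@B2@v)) \<and> dsc (u@B1@v) = dsc (u@B2@v)" by simp
qed


lemma fac_eq: "has_factor3 w a b c \<longleftrightarrow> (\<exists>u v. w = u @ [a,b,c] @ v)"
proof
  assume "has_factor3 w a b c"
  then obtain t where t: "t + 2 < length w" "w ! t = a" "w ! (t+1) = b" "w ! (t+2) = c"
    unfolding has_factor3_def by blast
  have d1: "drop t w = w!t # drop (Suc t) w" using t(1) by (simp add: Cons_nth_drop_Suc)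
  have d2: "drop (Suc t) w = w!(Suc t) # drop (Suc (Suc t)) w" using t(1) by (simp add: Cons_nth_drop_Suc)
  have d3: "drop (Suc (Suc t)) w = w!(Suc (Suc t)) # drop (Suc (Suc (Suc t))) w" using t(1) by (simp add: Cons_nth_drop_Suc)
  have "drop t w = w!t # w!(t+1) # w!(t+2) # drop (t+3) w"
    using d1 d2 d3 by (simp add: numeral_eq_Suc)
  then have e: "drop t w = [a,b,c] @ drop (t+3) w" using t by simp
  have "w = take t w @ drop t w" by simp
  then have "w = take t w @ [a,b,c] @ drop (t+3) w" using e by simp
  then show "\<exists>u v. w = u @ [a,b,c] @ v" by blast
next
  assume "\<exists>u v. w = u @ [a,b,c] @ v"
  then obtain u v where w: "w = u @ [a,b,c] @ v" by blast
  show "has_factor3 w a b c" unfolding has_factor3_def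
    by (rule exI[of _ "length u"]) (simp add: w nth_append)
qed

lemma uniq: "distinct (xs @ x # ys) \<Longrightarrow> xs @ x # ys = xs' @ x # ys' \<Longrightarrow> xs = xs' \<and> ys = ys'"
proof -
  assume d: "distinct (xs @ x # ys)" and e: "xs @ x # ys = xs' @ x # ys'"
  have h1: "x \<notin> set xs" using d by simp
  have h2: "x \<notin> set ys" using d by simp
  show ?thesis using append_Cons_eq_iff[OF h1 h2, of xs' ys'] e by simp
qed

definition na :: "nat list \<Rightarrow> bool" where
  "na w \<longleftrightarrow> (\<forall>p q. w \<noteq> p @ [2,3] @ q \<and> w \<noteq> p @ [3,2] @ q)"

lemma na_Cons: assumes "na (a # xs)" shows "na xs"
  unfolding na_def
proof (intro allI conjI notI)
  fix p q assume "xs = p @ [2,3] @ q"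
  then have "a # xs = (a#p) @ [2,3] @ q" by simp
  then show False using assms unfolding na_def by blast
next
  fix p q assume "xs = p @ [3,2] @ q"
  then have "a # xs = (a#p) @ [3,2] @ q" by simp
  then show False using assms unfolding na_def by blast
qed

lemma na_pair: assumes "na (a # b # xs)" shows "\<not> (b = 2 \<and> a = 3) \<and> \<not> (b = 3 \<and> a = 2)"
proof -
  have "a # b # xs \<noteq> [] @ [2,3] @ xs" "a # b # xs \<noteq> [] @ [3,2] @ xs"
    using assms unfolding na_def by blast+
  then show ?thesis by auto
qed

lemma na_take: assumes "na w" shows "na (take t w)"
  unfolding na_def
proof (intro allI conjI notI)
  fix p q assume "take t w = p @ [2,3] @ q"
  then have "w = p @ [2,3] @ (q @ drop t w)" by (metis append_take_drop_id append_assoc)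
  then show False using assms unfolding na_def by blast
next
  fix p q assume "take t w = p @ [3,2] @ q"
  then have "w = p @ [3,2] @ (q @ drop t w)" by (metis append_take_drop_id append_assoc)
  then show False using assms unfolding na_def by blast
qed

lemma dsc_tau: "na w \<Longrightarrow> dsc (map tau w) = dsc w \<and> asc (map tau w) = asc w"
proof (induct w)
  case Nil then show ?case by simp
next
  case (Cons a xs)
  have ih: "dsc (map tau xs) = dsc xs \<and> asc (map tau xs) = asc xs" using Cons na_Cons by blast
  show ?case
  proof (cases xs)
    case Nil then show ?thesis by simp
  next
    case (Cons b ys)
    have p: "\<not> (b = 2 \<and> a = 3) \<and> \<not> (b = 3 \<and> a = 2)" using na_pair \<open>na (a # xs)\<close> Cons by blast
    have "tau b < tau a \<longleftrightarrow> b < a" using p tau_less by blast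
    moreover have "tau a < tau b \<longleftrightarrow> a < b" using p tau_less by blast
    ultimately show ?thesis using ih Cons by simp
  qed
qed

lemma ht_tau: "na w \<Longrightarrow> ht (map tau w) = ht w"
  using dsc_tau unfolding ht_def by simp

lemma ballot_tau: "na w \<Longrightarrow> ballot (map tau w) \<longleftrightarrow> ballot w"
  unfolding ballot_eq by (simp add: take_map ht_tau na_take)

lemma tau_map_map[simp]: "map tau (map tau w) = w"
  by (induct w) simp_all

lemma na_tau: "na w \<Longrightarrow> na (map tau w)"
proof -
  assume a: "na w"
  show "na (map tau w)" unfolding na_def
  proof (intro allI conjI notI)
    fix p q assume "map tau w = p @ [2,3] @ q"
    then have "map tau (map tau w) = map tau p @ [3,2] @ map tau q" by simp
    then have "w = map tau p @ [3,2] @ map tau q" by simp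
    then show False using a unfolding na_def by blast
  next
    fix p q assume "map tau w = p @ [3,2] @ q"
    then have "map tau (map tau w) = map tau p @ [2,3] @ map tau q" by simp
    then have "w = map tau p @ [2,3] @ map tau q" by simp
    then show False using a unfolding na_def by blast
  qed
qed

lemma perm_tau: assumes "3 \<le> n" shows "is_perm_list n (map tau w) \<longleftrightarrow> is_perm_list n w"
proof -
  have ti: "tau ` {1..n} = {1..n}" using assms by simp
  have "tau ` X = {1..n} \<longleftrightarrow> X = {1..n}" for X
  proof
    assume "tau ` X = {1..n}"
    then have "tau ` tau ` X = tau ` {1..n}" by simp
    then show "X = {1..n}" using ti by (simp add: image_comp)
  qed (use ti in simp)
  moreover have "distinct (map tau w) \<longleftrightarrow> distinct w" by (simp add: distinct_map)
  ultimately show ?thesis unfolding is_perm_list_def by simp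
qed

lemma card_S:
  assumes eq: "\<And>u v. Q (u @ B1 @ v) \<longleftrightarrow> Q (u @ B2 @ v)" and dq: "\<And>w. Q w \<Longrightarrow> distinct w"
    and ne: "B1 \<noteq> []" "B2 \<noteq> []"
  shows "card {w. Q w \<and> (\<exists>u v. w = u @ B1 @ v)} = card {w. Q w \<and> (\<exists>u v. w = u @ B2 @ v)}"
proof -
  have img: "{w. Q w \<and> (\<exists>u v. w = u @ B @ v)} = (\<lambda>(u,v). u @ B @ v) ` {(u,v). Q (u @ B @ v)}" for B
    by auto
  have inj: "inj_on (\<lambda>(u,v). u @ B @ v) {(u,v). Q (u @ B @ v)}" if Bne: "B \<noteq> []" for B
  proof (rule inj_onI, clarify)
    fix u v u' v' assume q: "Q (u @ B @ v)" and e: "u @ B @ v = u' @ B @ v'"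
    obtain c r where B: "B = c # r" using Bne by (cases B) auto
    have d: "distinct (u @ c # (r @ v))" using dq[OF q] B by simp
    have "u @ c # (r @ v) = u' @ c # (r @ v')" using e B by simp
    then have "u = u' \<and> r @ v = r @ v'" using uniq[OF d] by blast
    then show "u = u' \<and> v = v'" by simp
  qed
  have "card {w. Q w \<and> (\<exists>u v. w = u @ B1 @ v)} = card {(u,v). Q (u @ B1 @ v)}"
    unfolding img by (rule card_image[OF inj[OF ne(1)]])
  also have "{(u,v). Q (u @ B1 @ v)} = {(u,v). Q (u @ B2 @ v)}" using eq by auto
  also have "card \<dots> = card {w. Q w \<and> (\<exists>u v. w = u @ B2 @ v)}"
    unfolding img by (rule card_image[OF inj[OF ne(2)], symmetric])
  finally show ?thesis .
qed

lemma last_ne: "u @ [x, y] = p @ [z] \<Longrightarrow> y = z"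
proof -
  assume "u @ [x, y] = p @ [z]"
  then have "last (u @ [x, y]) = last (p @ [z])" by simp
  then show ?thesis by simp
qed

lemma notna: "\<not> na w \<Longrightarrow> (\<exists>p q. w = p @ [2,3] @ q) \<or> (\<exists>p q. w = p @ [3,2] @ q)"
  unfolding na_def by blast

lemma c12: assumes d: "distinct w" and n: "n \<noteq> 3" and w: "w = u @ [1,n,2] @ v" and a: "\<not> na w"
  shows "\<exists>u v. w = u @ [1,n,2,3] @ v"
proof -
  have w': "w = (u @ [1,n]) @ 2 # v" using w by simp
  have d': "distinct ((u @ [1,n]) @ 2 # v)" using d w' by simp
  from notna[OF a] show ?thesis
  proof
    assume "\<exists>p q. w = p @ [2,3] @ q"
    then obtain p q where pq: "w = p @ 2 # (3 # q)" by auto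
    have e: "(u @ [1,n]) @ 2 # v = p @ 2 # (3 # q)" using w' pq by simp
    have "u @ [1,n] = p \<and> v = 3 # q" using uniq[OF d' e] by simp
    then have "w = u @ [1,n,2,3] @ q" using w by simp
    then show ?thesis by blast
  next
    assume "\<exists>p q. w = p @ [3,2] @ q"
    then obtain p q where pq: "w = (p @ [3]) @ 2 # q" by auto
    have e: "(u @ [1,n]) @ 2 # v = (p @ [3]) @ 2 # q" using w' pq by simp
    have hl: "u @ [1,n] = p @ [3]" using uniq[OF d' e] by simp
    have False using last_ne[OF hl] n by simp
    then show ?thesis ..
  qed
qed

lemma c21: assumes d: "distinct w" and n: "n \<noteq> 3" and w: "w = u @ [2,n,1] @ v" and a: "\<not> na w"
  shows "\<exists>u v. w = u @ [3,2,n,1] @ v"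
proof -
  have w': "w = u @ 2 # (n # 1 # v)" using w by simp
  have d': "distinct (u @ 2 # (n # 1 # v))" using d w' by simp
  from notna[OF a] show ?thesis
  proof
    assume "\<exists>p q. w = p @ [2,3] @ q"
    then obtain p q where pq: "w = p @ 2 # (3 # q)" by auto
    have e: "u @ 2 # (n # 1 # v) = p @ 2 # (3 # q)" using w' pq by simp
    have "n # 1 # v = 3 # q" using uniq[OF d' e] by simp
    then show ?thesis using n by simp
  next
    assume "\<exists>p q. w = p @ [3,2] @ q"
    then obtain p q where pq: "w = (p @ [3]) @ 2 # q" by auto
    have e: "u @ 2 # (n # 1 # v) = (p @ [3]) @ 2 # q" using w' pq by simp
    have "u = p @ [3] \<and> n # 1 # v = q" using uniq[OF d' e] by simp
    then have "w = p @ [3,2,n,1] @ v" using w by simp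
    then show ?thesis by blast
  qed
qed

lemma c13: assumes d: "distinct w" and n: "n \<noteq> 2" and w: "w = u @ [1,n,3] @ v" and a: "\<not> na w"
  shows "\<exists>u v. w = u @ [1,n,3,2] @ v"
proof -
  have w': "w = (u @ [1,n]) @ 3 # v" using w by simp
  have d': "distinct ((u @ [1,n]) @ 3 # v)" using d w' by simp
  from notna[OF a] show ?thesis
  proof
    assume "\<exists>p q. w = p @ [2,3] @ q"
    then obtain p q where pq: "w = (p @ [2]) @ 3 # q" by auto
    have e: "(u @ [1,n]) @ 3 # v = (p @ [2]) @ 3 # q" using w' pq by simp
    have hl: "u @ [1,n] = p @ [2]" using uniq[OF d' e] by simp
    have False using last_ne[OF hl] n by simp
    then show ?thesis ..
  next
    assume "\<exists>p q. w = p @ [3,2] @ q"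
    then obtain p q where pq: "w = p @ 3 # (2 # q)" by auto
    have e: "(u @ [1,n]) @ 3 # v = p @ 3 # (2 # q)" using w' pq by simp
    have "u @ [1,n] = p \<and> v = 2 # q" using uniq[OF d' e] by simp
    then have "w = u @ [1,n,3,2] @ q" using w by simp
    then show ?thesis by blast
  qed
qed

lemma c31: assumes d: "distinct w" and n: "n \<noteq> 2" and w: "w = u @ [3,n,1] @ v" and a: "\<not> na w"
  shows "\<exists>u v. w = u @ [2,3,n,1] @ v"
proof -
  have w': "w = u @ 3 # (n # 1 # v)" using w by simp
  have d': "distinct (u @ 3 # (n # 1 # v))" using d w' by simp
  from notna[OF a] show ?thesis
  proof
    assume "\<exists>p q. w = p @ [2,3] @ q"
    then obtain p q where pq: "w = (p @ [2]) @ 3 # q" by auto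
    have e: "u @ 3 # (n # 1 # v) = (p @ [2]) @ 3 # q" using w' pq by simp
    have "u = p @ [2] \<and> n # 1 # v = q" using uniq[OF d' e] by simp
    then have "w = p @ [2,3,n,1] @ v" using w by simp
    then show ?thesis by blast
  next
    assume "\<exists>p q. w = p @ [3,2] @ q"
    then obtain p q where pq: "w = p @ 3 # (2 # q)" by auto
    have e: "u @ 3 # (n # 1 # v) = p @ 3 # (2 # q)" using w' pq by simp
    have "n # 1 # v = 2 # q" using uniq[OF d' e] by simp
    then show ?thesis using n by simp
  qed
qed

lemma b_main:
  assumes n: "4 \<le> n"
  shows "b_count n d 1 2 + b_count n d 2 1 = b_count n d 1 3 + b_count n d 3 1"
proof -
  define Q where "Q w \<longleftrightarrow> is_perm_list n w \<and> ballot w \<and> int (dsc w) = d" for w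
  define A where "A i j = {w. Q w \<and> (\<exists>u v. w = u @ [i,n,j] @ v)}" for i j
  define N where "N i j = {w \<in> A i j. na w}" for i j
  define S where "S B = {w. Q w \<and> (\<exists>u v. w = u @ B @ v)}" for B
  have bA: "b_count n d i j = card (A i j)" for i j
    unfolding b_count_def A_def Q_def fac_eq des_eq by (rule arg_cong[where f=card]) auto
  have dq: "distinct w" if "Q w" for w using that unfolding Q_def is_perm_list_def by simp
  have finP: "finite {w. is_perm_list n w}"
  proof (rule finite_subset[OF _ finite_lists_length_eq[OF finite_atLeastAtMost[of 1 n]]])
    show "{w. is_perm_list n w} \<subseteq> {xs. set xs \<subseteq> {1..n} \<and> length xs = n}"
    proof
      fix w assume "w \<in> {w. is_perm_list n w}"
      then have p: "distinct w" "set w = {1..n}" unfolding is_perm_list_def by auto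
      have "length w = card (set w)" using distinct_card[OF p(1)] by simp
      then show "w \<in> {xs. set xs \<subseteq> {1..n} \<and> length xs = n}" using p by simp
    qed
  qed
  have finA: "finite (A i j)" for i j by (rule finite_subset[OF _ finP]) (auto simp: A_def Q_def)
  have finS: "finite (S B)" for B by (rule finite_subset[OF _ finP]) (auto simp: S_def Q_def)
  have finN: "finite (N i j)" for i j using finA unfolding N_def by simp
  have dec: "card (A i j) = card (N i j) + card (S B)"
    if sub: "S B \<subseteq> A i j" and nn: "\<And>w. w \<in> S B \<Longrightarrow> \<not> na w"
      and cv: "\<And>w. w \<in> A i j \<Longrightarrow> \<not> na w \<Longrightarrow> w \<in> S B" for i j B
  proof -
    have "A i j = N i j \<union> S B" using sub cv unfolding N_def by blast
    moreover have "N i j \<inter> S B = {}" using nn unfolding N_def by blast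
    ultimately show ?thesis using card_Un_disjoint[OF finN finS] by simp
  qed
  have n3: "n \<noteq> 3" "n \<noteq> 2" using n by auto
  have d12: "card (A 1 2) = card (N 1 2) + card (S [1,n,2,3])"
  proof (rule dec)
    show "S [1,n,2,3] \<subseteq> A 1 2"
    proof
      fix w assume "w \<in> S [1,n,2,3]"
      then obtain u v where q: "Q w" and w: "w = u @ [1,n,2,3] @ v" unfolding S_def by blast
      then have "w = u @ [1,n,2] @ (3 # v)" by simp
      then show "w \<in> A 1 2" using q unfolding A_def by blast
    qed
    fix w assume "w \<in> S [1,n,2,3]"
    then obtain u v where w: "w = u @ [1,n,2,3] @ v" unfolding S_def by blast
    then have "w = (u @ [1,n]) @ [2,3] @ v" by simp
    then show "\<not> na w" unfolding na_def by blast
  next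
    fix w assume a: "w \<in> A 1 2" "\<not> na w"
    then obtain u v where q: "Q w" and w: "w = u @ [1,n,2] @ v" unfolding A_def by blast
    show "w \<in> S [1,n,2,3]" using c12[OF dq[OF q] n3(1) w a(2)] q unfolding S_def by blast
  qed
  have d21: "card (A 2 1) = card (N 2 1) + card (S [3,2,n,1])"
  proof (rule dec)
    show "S [3,2,n,1] \<subseteq> A 2 1"
    proof
      fix w assume "w \<in> S [3,2,n,1]"
      then obtain u v where q: "Q w" and w: "w = u @ [3,2,n,1] @ v" unfolding S_def by blast
      then have "w = (u @ [3]) @ [2,n,1] @ v" by simp
      then show "w \<in> A 2 1" using q unfolding A_def by blast
    qed
    fix w assume "w \<in> S [3,2,n,1]"
    then obtain u v where w: "w = u @ [3,2,n,1] @ v" unfolding S_def by blast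
    then have "w = u @ [3,2] @ (n # 1 # v)" by simp
    then show "\<not> na w" unfolding na_def by blast
  next
    fix w assume a: "w \<in> A 2 1" "\<not> na w"
    then obtain u v where q: "Q w" and w: "w = u @ [2,n,1] @ v" unfolding A_def by blast
    show "w \<in> S [3,2,n,1]" using c21[OF dq[OF q] n3(1) w a(2)] q unfolding S_def by blast
  qed
  have d13: "card (A 1 3) = card (N 1 3) + card (S [1,n,3,2])"
  proof (rule dec)
    show "S [1,n,3,2] \<subseteq> A 1 3"
    proof
      fix w assume "w \<in> S [1,n,3,2]"
      then obtain u v where q: "Q w" and w: "w = u @ [1,n,3,2] @ v" unfolding S_def by blast
      then have "w = u @ [1,n,3] @ (2 # v)" by simp
      then show "w \<in> A 1 3" using q unfolding A_def by blast
    qed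
    fix w assume "w \<in> S [1,n,3,2]"
    then obtain u v where w: "w = u @ [1,n,3,2] @ v" unfolding S_def by blast
    then have "w = (u @ [1,n]) @ [3,2] @ v" by simp
    then show "\<not> na w" unfolding na_def by blast
  next
    fix w assume a: "w \<in> A 1 3" "\<not> na w"
    then obtain u v where q: "Q w" and w: "w = u @ [1,n,3] @ v" unfolding A_def by blast
    show "w \<in> S [1,n,3,2]" using c13[OF dq[OF q] n3(2) w a(2)] q unfolding S_def by blast
  qed
  have d31: "card (A 3 1) = card (N 3 1) + card (S [2,3,n,1])"
  proof (rule dec)
    show "S [2,3,n,1] \<subseteq> A 3 1"
    proof
      fix w assume "w \<in> S [2,3,n,1]"
      then obtain u v where q: "Q w" and w: "w = u @ [2,3,n,1] @ v" unfolding S_def by blast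
      then have "w = (u @ [2]) @ [3,n,1] @ v" by simp
      then show "w \<in> A 3 1" using q unfolding A_def by blast
    qed
    fix w assume "w \<in> S [2,3,n,1]"
    then obtain u v where w: "w = u @ [2,3,n,1] @ v" unfolding S_def by blast
    then have "w = u @ [2,3] @ (n # 1 # v)" by simp
    then show "\<not> na w" unfolding na_def by blast
  next
    fix w assume a: "w \<in> A 3 1" "\<not> na w"
    then obtain u v where q: "Q w" and w: "w = u @ [3,n,1] @ v" unfolding A_def by blast
    show "w \<in> S [2,3,n,1]" using c31[OF dq[OF q] n3(2) w a(2)] q unfolding S_def by blast
  qed
  have tv: "tau 1 = 1" "tau n = n" "tau 2 = 3" "tau 3 = 2" using n by (auto simp: transpose_def)
  have tQ: "Q (map tau w) \<longleftrightarrow> Q w" if "na w" for w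
    unfolding Q_def using perm_tau[of n w] ballot_tau[OF that] dsc_tau[OF that] n by simp
  have NN: "map tau w \<in> N (tau i) (tau j)" if wN: "w \<in> N i j" for w i j
  proof -
    obtain u v where q: "Q w" and a: "na w" and w: "w = u @ [i,n,j] @ v"
      using wN unfolding N_def A_def by blast
    have "map tau w = map tau u @ [tau i, n, tau j] @ map tau v" using w tv by simp
    then show ?thesis using tQ[OF a] q na_tau[OF a] unfolding N_def A_def by blast
  qed
  have cN: "card (N i j) = card (N (tau i) (tau j))" if ij: "tau (tau i) = i" "tau (tau j) = j" for i j
  proof (rule bij_betw_same_card[of "map tau"], rule bij_betw_byWitness[where f'="map tau"])
    show "\<forall>w\<in>N i j. map tau (map tau w) = w" by simp
    show "\<forall>w\<in>N (tau i) (tau j). map tau (map tau w) = w" by simp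
    show "map tau ` N i j \<subseteq> N (tau i) (tau j)" using NN by blast
    show "map tau ` N (tau i) (tau j) \<subseteq> N i j" using NN[of _ "tau i" "tau j"] ij by auto
  qed
  have N1: "card (N 1 2) = card (N 1 3)" using cN[of 1 2] tv by simp
  have N2: "card (N 2 1) = card (N 3 1)" using cN[of 2 1] tv by simp
  have bq: "Q (u @ B1 @ v) \<longleftrightarrow> Q (u @ B2 @ v)"
    if B: "(B1 = [1,n,2,3] \<and> B2 = [2,3,n,1]) \<or> (B1 = [3,2,n,1] \<and> B2 = [1,n,3,2])" for u v B1 B2
  proof (cases "is_perm_list n (u @ B1 @ v)")
    case True
    have "(ballot (u@B1@v) \<longleftrightarrow> ballot (u@B2@v)) \<and> dsc (u@B1@v) = dsc (u@B2@v)"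
      by (rule block_equiv(2)[OF n B True])
    then show ?thesis using True block_equiv(1)[OF n B, of u v] unfolding Q_def by simp
  next
    case False
    then have "\<not> is_perm_list n (u @ B2 @ v)" using block_equiv(1)[OF n B, of u v] by simp
    then show ?thesis using False unfolding Q_def by simp
  qed
  have e1: "Q (u @ [1,n,2,3] @ v) \<longleftrightarrow> Q (u @ [2,3,n,1] @ v)" for u v by (rule bq) simp
  have e2: "Q (u @ [3,2,n,1] @ v) \<longleftrightarrow> Q (u @ [1,n,3,2] @ v)" for u v by (rule bq) simp
  have S1: "card (S [1,n,2,3]) = card (S [2,3,n,1])"
    unfolding S_def by (rule card_S[OF e1 dq]) simp_all
  have S2: "card (S [3,2,n,1]) = card (S [1,n,3,2])"
    unfolding S_def by (rule card_S[OF e2 dq]) simp_all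
  show ?thesis unfolding bA using d12 d21 d13 d31 N1 N2 S1 S2 by simp
qed


theorem proposition4p3:
  fixes n :: nat and d :: int
  assumes "n \<ge> 4"
    and "b_count n d 1 2 + b_count n d 2 1 = 2 * p_count n d 1 2"
  shows "b_count n d 1 3 + b_count n d 3 1 = 2 * p_count n d 1 3"
proof -
  have "b_count n d 1 3 + b_count n d 3 1 = b_count n d 1 2 + b_count n d 2 1"
    using b_main[OF assms(1)] by simp
  also have "\<dots> = 2 * p_count n d 1 2" by (rule assms(2))
  also have "\<dots> = 2 * p_count n d 1 3" using p_main[OF assms(1)] by simp
  finally show ?thesis .
qed

end
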